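(* Let $\mathcal{M}_i=(E_i,\rho_i)$, $i=1,2$, be $q$-matroids, let $\mathcal{F}_i$ and $\mathcal{Z}_i$ be the collections of flats and of cyclic flats of $\mathcal{M}_i$, and let $\rho$ be the rank function of $\mathcal{M}_1\oplus\mathcal{M}_2$ on $E=E_1\oplus E_2$. Then for all subspaces $V\le E$, \[ \rho(V)=\dim V+\min_{F_1\in\mathcal{F}_1,F_2\in\mathcal{F}_2}\big(\rho_1(F_1)+\rho_2(F_2)-\dim((F_1\oplus F_2)\cap V)\big) =\dim V+\min_{Z_1\in\mathcal{Z}_1,Z_2\in\mathcal{Z}_2}\big(\rho_1(Z_1)+\rho_2(Z_2)-\dim((Z_1\oplus Z_2)\cap V)\big). \]
   Context: Let $\mathbb{F}=\mathbb{F}_q$. A $q$-matroid is $\mathcal{M}=(E,\rho)$, $E$ a finite-dimensional $\mathbb{F}$-vector space, $\rho$ from subspaces to $\mathbb{Z}_{\ge0}$ with $0\le\rho(V)\le\dim V$, monotone and submodular. A flat is $F$ with $\rho(F+\langle x\rangle)>\rho(F)$ for all $x\notin F$. The cyclic core is $\mathrm{cyc}(V)=\{x\in V\mid\rho(W)=\rho(V)\text{ for all }W\le V\text{ with }W+\langle x\rangle=V\}$; $V$ is cyclic if $\mathrm{cyc}(V)=V$; a cyclic flat is a flat that is cyclic. Direct sum: for $E=E_1\oplus E_2$ (each $E_i$ identified with its image) with projections $\pi_i:E\to E_i$, $\mathcal{M}_1\oplus\mathcal{M}_2=(E,\rho)$ where $\rho(V)=\dim V+\min_{X\le V}(\rho_1(\pi_1(X))+\rho_2(\pi_2(X))-\dim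 X)$. *)

theory Defs
  imports Main "HOL.Vector_Spaces" "HOL-Library.Product_Plus"
begin

definition fin_dim :: "('f::field \<Rightarrow> 'v::ab_group_add \<Rightarrow> 'v) \<Rightarrow> bool" where
  "fin_dim s \<longleftrightarrow> (\<exists>B. finite B \<and> module.span s B = UNIV)"

definition qmatroid :: "('f::{field,finite} \<Rightarrow> 'v::ab_group_add \<Rightarrow> 'v) \<Rightarrow> ('v set \<Rightarrow> nat) \<Rightarrow> bool" where
  "qmatroid s rho \<longleftrightarrow> vector_space s \<and> fin_dim s \<and>
     (\<forall>V. module.subspace s V \<longrightarrow> rho V \<le> vector_space.dim s V) \<and>
     (\<forall>V W. module.subspace s V \<and> module.subspace s W \<and> V \<subseteq> W \<longrightarrow> rho V \<le> rho W) \<and>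
     (\<forall>V W. module.subspace s V \<and> module.subspace s W \<longrightarrow>
        rho (module.span s (V \<union> W)) + rho (V \<inter> W) \<le> rho V + rho W)"

definition qflat :: "('f::field \<Rightarrow> 'v::ab_group_add \<Rightarrow> 'v) \<Rightarrow> ('v set \<Rightarrow> nat) \<Rightarrow> 'v set \<Rightarrow> bool" where
  "qflat s rho F \<longleftrightarrow> module.subspace s F \<and>
     (\<forall>x. x \<notin> F \<longrightarrow> rho F < rho (module.span s (insert x F)))"

definition qcyc :: "('f::field \<Rightarrow> 'v::ab_group_add \<Rightarrow> 'v) \<Rightarrow> ('v set \<Rightarrow> nat) \<Rightarrow> 'v set \<Rightarrow> 'v set" where
  "qcyc s rho V = {x \<in> V. \<forall>W. module.subspace s W \<and> W \<subseteq> V \<and>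
       module.span s (insert x W) = V \<longrightarrow> rho W = rho V}"

definition qcyclic :: "('f::field \<Rightarrow> 'v::ab_group_add \<Rightarrow> 'v) \<Rightarrow> ('v set \<Rightarrow> nat) \<Rightarrow> 'v set \<Rightarrow> bool" where
  "qcyclic s rho V \<longleftrightarrow> qcyc s rho V = V"

definition qcyclic_flat :: "('f::field \<Rightarrow> 'v::ab_group_add \<Rightarrow> 'v) \<Rightarrow> ('v set \<Rightarrow> nat) \<Rightarrow> 'v set \<Rightarrow> bool" where
  "qcyclic_flat s rho F \<longleftrightarrow> qflat s rho F \<and> qcyclic s rho F"

text \<open>External direct sum E = E1 \<oplus> E2 realised as the product type; E1 is identified
  with its image {(x,0)}, E2 with {(0,y)}; the projections are fst and snd.\<close>
definition prod_scale :: "('f \<Rightarrow> 'a \<Rightarrow> 'a) \<Rightarrow> ('f \<Rightarrow> 'b \<Rightarrow> 'b) \<Rightarrow> 'f \<Rightarrow> 'a \<times> 'b \<Rightarrow> 'a \<times> 'b" where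
  "prod_scale s1 s2 c p = (s1 c (fst p), s2 c (snd p))"

definition qsum_rank ::
  "('f::field \<Rightarrow> 'a::ab_group_add \<Rightarrow> 'a) \<Rightarrow> ('a set \<Rightarrow> nat) \<Rightarrow>
   ('f \<Rightarrow> 'b::ab_group_add \<Rightarrow> 'b) \<Rightarrow> ('b set \<Rightarrow> nat) \<Rightarrow> ('a \<times> 'b) set \<Rightarrow> int" where
  "qsum_rank s1 rho1 s2 rho2 V =
     int (vector_space.dim (prod_scale s1 s2) V) +
     Min {int (rho1 (fst ` X)) + int (rho2 (snd ` X)) - int (vector_space.dim (prod_scale s1 s2) X)
          | X. module.subspace (prod_scale s1 s2) X \<and> X \<subseteq> V}"

end

theory Submission
  imports Defs "HOL-Library.FuncSet"
begin


lemma fin_UNIV_of_fin_dim: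
  fixes s :: "'f::{field,finite} \<Rightarrow> 'v::ab_group_add \<Rightarrow> 'v"
  assumes "fin_dim s" "vector_space s"
  shows "finite (UNIV::'v set)"
proof -
  interpret vector_space s by fact
  obtain B where B: "finite B" "span B = UNIV" using assms(1) unfolding fin_dim_def by blast
  have "UNIV \<subseteq> (\<lambda>u. \<Sum>v\<in>B. s (u v) v) ` (B \<rightarrow>\<^sub>E UNIV)"
  proof
    fix x :: 'v
    have "x \<in> span B" using B by simp
    then obtain u where "x = (\<Sum>v\<in>B. s (u v) v)" using span_finite[OF B(1)] by auto
    also have "\<dots> = (\<Sum>v\<in>B. s (restrict u B v) v)" by (rule sum.cong) auto
    finally show "x \<in> (\<lambda>u. \<Sum>v\<in>B. s (u v) v) ` (B \<rightarrow>\<^sub>E UNIV)"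
      by (intro image_eqI[of _ _ "restrict u B"]) auto
  qed
  moreover have "finite (B \<rightarrow>\<^sub>E (UNIV::'f set))" using B(1) by (intro finite_PiE) auto
  ultimately show ?thesis using finite_subset by blast
qed

lemma fdvs_exists:
  fixes s :: "'f::field \<Rightarrow> 'v::ab_group_add \<Rightarrow> 'v"
  assumes "vector_space s" "finite (UNIV::'v set)"
  shows "\<exists>B. finite_dimensional_vector_space s B"
proof -
  interpret vector_space s by fact
  obtain B where "independent B" "UNIV \<subseteq> span B" using maximal_independent_subset[of UNIV] by blast
  then show ?thesis unfolding finite_dimensional_vector_space_def finite_dimensional_vector_space_axioms_def
    using assms finite_subset[OF subset_UNIV assms(2)] by (intro exI[of _ B]) auto
qed

lemma vs_prod:
  assumes "vector_space s1" "vector_space s2"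
  shows "vector_space (prod_scale s1 s2)"
  using assms unfolding vector_space_def prod_scale_def by (auto simp: prod_eq_iff)



lemma qm_vs: "qmatroid s rho \<Longrightarrow> vector_space s" unfolding qmatroid_def by (elim conjE)
lemma qm_fin: "qmatroid (s::'f::{field,finite} \<Rightarrow> 'v::ab_group_add \<Rightarrow> 'v) rho \<Longrightarrow> finite (UNIV::'v set)"
  unfolding qmatroid_def by (elim conjE) (erule fin_UNIV_of_fin_dim)
lemma qm_mono: "qmatroid s rho \<Longrightarrow> module.subspace s V \<Longrightarrow> module.subspace s W \<Longrightarrow> V \<subseteq> W \<Longrightarrow> rho V \<le> rho W"
  unfolding qmatroid_def by (elim conjE) (erule allE[of _ V], erule allE[of _ W], simp)
lemma qm_submod: "qmatroid s rho \<Longrightarrow> module.subspace s V \<Longrightarrow> module.subspace s W \<Longrightarrow>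
   rho (module.span s (V \<union> W)) + rho (V \<inter> W) \<le> rho V + rho W"
  unfolding qmatroid_def by (elim conjE) (erule allE[of _ V], erule allE[of _ W], simp)

lemma closure_exists:
  fixes s :: "'f::{field,finite} \<Rightarrow> 'v::ab_group_add \<Rightarrow> 'v"
  assumes qm: "qmatroid s rho" and A: "module.subspace s A"
  shows "\<exists>F. qflat s rho F \<and> A \<subseteq> F \<and> rho F = rho A"
proof -
  interpret vector_space s using qm_vs[OF qm] .
  have finU: "finite (UNIV::'v set)" using qm_fin[OF qm] .
  let ?P = "\<lambda>W. subspace W \<and> A \<subseteq> W \<and> rho W = rho A"
  have "\<forall>y. ?P y \<longrightarrow> card y < Suc (card (UNIV::'v set))"
  proof (intro allI impI)
    fix y :: "'v set" show "card y < Suc (card (UNIV::'v set))"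
      using card_mono[OF finU subset_UNIV[of y]] by linarith
  qed
  then obtain F where F: "?P F" and Fmax: "\<And>y. ?P y \<Longrightarrow> card y \<le> card F"
    using Lattices_Big.ex_has_greatest_nat[of ?P A card "Suc (card (UNIV::'v set))"] A by auto
  have "qflat s rho F"
    unfolding qflat_def
  proof (intro conjI allI impI)
    show "subspace F" using F by blast
    fix x assume x: "x \<notin> F"
    let ?G = "span (insert x F)"
    have FG: "F \<subseteq> ?G" using span_superset[of "insert x F"] by blast
    have "x \<in> ?G" by (simp add: span_base)
    hence FG': "F \<subset> ?G" using FG x by blast
    have "rho F \<le> rho ?G" by (rule qm_mono[OF qm]) (use F FG in auto)
    moreover have "rho ?G \<noteq> rho F"
    proof
      assume "rho ?G = rho F"
      hence "?P ?G" using F FG by auto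
      hence "card ?G \<le> card F" by (rule Fmax)
      moreover have "card F < card ?G" using FG' finite_subset[OF subset_UNIV finU] by (intro psubset_card_mono) auto
      ultimately show False by simp
    qed
    ultimately show "rho F < rho ?G" by simp
  qed
  then show ?thesis using F by blast
qed



lemma cyclic_flat_below:
  fixes s :: "'f::{field,finite} \<Rightarrow> 'v::ab_group_add \<Rightarrow> 'v"
  assumes qm: "qmatroid s rho" and F: "qflat s rho F"
  shows "\<exists>Z. qcyclic_flat s rho Z \<and> Z \<subseteq> F \<and>
     int (rho Z) - int (vector_space.dim s Z) \<le> int (rho F) - int (vector_space.dim s F)"
proof -
  interpret vector_space s using qm_vs[OF qm] .
  have finU: "finite (UNIV::'v set)" using qm_fin[OF qm] .
  obtain Bs where "finite_dimensional_vector_space s Bs" using fdvs_exists[OF qm_vs[OF qm] finU] by blast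
  then interpret fd: finite_dimensional_vector_space s Bs .
  have Fs: "subspace F" using F unfolding qflat_def by blast
  define S where "S = {Z. subspace Z \<and> Z \<subseteq> F}"
  define val where "val Z = int (rho Z) - int (dim Z)" for Z
  have finS: "finite S" 
  proof -
    have "finite (UNIV :: 'v set set)" using finU by (simp add: Finite_Set.finite_set)
    then show ?thesis using finite_subset[OF subset_UNIV] by blast
  qed
  have FS: "F \<in> S" using Fs unfolding S_def by blast
  define m where "m = Min (val ` S)"
  have mle: "\<And>Z. Z \<in> S \<Longrightarrow> m \<le> val Z" unfolding m_def using finS by simp
  have "m \<in> val ` S" unfolding m_def using finS FS by (intro Min_in) auto
  then obtain Z0 where Z0: "Z0 \<in> S" "val Z0 = m" by auto
  let ?T = "\<lambda>Z. Z \<in> S \<and> val Z = m"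
  obtain Z where Z: "?T Z" and Zmin: "\<And>Y. ?T Y \<Longrightarrow> dim Z \<le> dim Y"
    using ex_has_least_nat[of ?T Z0 dim] Z0 by blast
  have Zs: "subspace Z" and ZF: "Z \<subseteq> F" using Z unfolding S_def by auto
  have spanZ: "span Z = Z" using Zs by simp
  have cyc: "qcyclic s rho Z"
    unfolding qcyclic_def qcyc_def
  proof (intro set_eqI iffI)
    fix x assume "x \<in> {x \<in> Z. \<forall>W. subspace W \<and> W \<subseteq> Z \<and> span (insert x W) = Z \<longrightarrow> rho W = rho Z}"
    then show "x \<in> Z" by blast
  next
    fix x assume xZ: "x \<in> Z"
    have "rho W = rho Z" if W: "subspace W" "W \<subseteq> Z" "span (insert x W) = Z" for W
    proof (cases "x \<in> W")
      case True
      then have "span (insert x W) = span W" by (simp add: span_base span_redundant)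
      moreover have "span W = W" using W(1) by (rule span_eq_iff[THEN iffD2])
      ultimately have "W = Z" using W(3) by simp
      then show ?thesis by simp
    next
      case False
      have "span W = W" using W(1) by (rule span_eq_iff[THEN iffD2])
      then have "x \<notin> span W" using False by (simp del: span_eq_iff)
      then have dZ: "dim Z = dim W + 1" using W(3) fd.dim_insert[of x W] dim_span[of "insert x W"] by (simp del: span_eq_iff)
      have WS: "W \<in> S" using W ZF unfolding S_def by auto
      have "rho W \<le> rho Z" using qm_mono[OF qm W(1) Zs W(2)] .
      moreover have "\<not> rho W < rho Z"
      proof
        assume lt: "rho W < rho Z"
        have "m \<le> val W" using mle[OF WS] .
        then have "val W = m" using Z lt dZ unfolding val_def by auto
        then have "dim Z \<le> dim W" using Zmin WS by blast
        then show False using dZ by simp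
      qed
      ultimately show ?thesis by simp
    qed
    then show "x \<in> {x \<in> Z. \<forall>W. subspace W \<and> W \<subseteq> Z \<and> span (insert x W) = Z \<longrightarrow> rho W = rho Z}"
      using xZ by blast
  qed
  have flat: "qflat s rho Z"
    unfolding qflat_def
  proof (intro conjI allI impI)
    show "subspace Z" by fact
    fix x assume xZ: "x \<notin> Z"
    let ?Z' = "span (insert x Z)"
    have ZZ': "Z \<subseteq> ?Z'" using span_superset[of "insert x Z"] by blast
    have le: "rho Z \<le> rho ?Z'" by (rule qm_mono[OF qm Zs subspace_span ZZ'])
    have dZ': "dim ?Z' = dim Z + 1"
      using xZ spanZ fd.dim_insert[of x Z] dim_span[of "insert x Z"] by (simp del: span_eq_iff)
    have "rho ?Z' \<noteq> rho Z"
    proof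
      assume eq: "rho ?Z' = rho Z"
      show False
      proof (cases "x \<in> F")
        case True
        have "?Z' \<subseteq> F" using True ZF Fs by (intro span_minimal) auto
        then have "?Z' \<in> S" unfolding S_def by auto
        then have "m \<le> val ?Z'" by (rule mle)
        then show False using Z eq dZ' unfolding val_def by simp
      next
        case False
        have sm: "rho (span (F \<union> ?Z')) + rho (F \<inter> ?Z') \<le> rho F + rho ?Z'"
          by (rule qm_submod[OF qm Fs subspace_span])
        have "span (F \<union> ?Z') = span (insert x F)"
        proof -
          have "F \<union> ?Z' \<subseteq> span (insert x F)"
            using span_superset[of "insert x F"] span_mono[of "insert x Z" "insert x F"] ZF by blast
          moreover have "insert x F \<subseteq> span (F \<union> ?Z')"
            using span_superset[of "F \<union> ?Z'"] span_superset[of "insert x Z"] by blast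
          ultimately show ?thesis by (simp add: span_eq)
        qed
        moreover have "rho Z \<le> rho (F \<inter> ?Z')"
          by (rule qm_mono[OF qm Zs]) (use Fs ZF ZZ' subspace_inter in auto)
        ultimately have "rho (span (insert x F)) \<le> rho F" using sm eq by simp
        moreover have "rho F < rho (span (insert x F))" using F False unfolding qflat_def by blast
        ultimately show False by simp
      qed
    qed
    then show "rho Z < rho ?Z'" using le by simp
  qed
  have "val Z \<le> val F" using Z mle[OF FS] by simp
  then show ?thesis using cyc flat ZF unfolding qcyclic_flat_def val_def by blast
qed



lemma step_dim:
  fixes s :: "'f::field \<Rightarrow> 'v::ab_group_add \<Rightarrow> 'v"
  assumes fd: "finite_dimensional_vector_space s Bs"
    and A: "module.subspace s A" and AB: "A \<subseteq> B" and Bv: "B \<subseteq> module.span s (insert v A)"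
    and V: "module.subspace s V"
  shows "vector_space.dim s (B \<inter> V) \<le> vector_space.dim s (A \<inter> V) + 1"
proof -
  interpret finite_dimensional_vector_space s Bs by fact
  have spA: "span A = A" using A by (rule span_eq_iff[THEN iffD2])
  show ?thesis
  proof (cases "B \<inter> V \<subseteq> A")
    case True
    then have "B \<inter> V = A \<inter> V" using AB by blast
    then show ?thesis by simp
  next
    case False
    then obtain y where y: "y \<in> B" "y \<in> V" "y \<notin> A" by blast
    obtain k0 where k0: "y - s k0 v \<in> A" using Bv y(1) span_breakdown_eq[of y v A] spA by auto
    have k0nz: "k0 \<noteq> 0" using k0 y(3) by auto
    have "B \<inter> V \<subseteq> span (insert y (A \<inter> V))"
    proof
      fix z assume z: "z \<in> B \<inter> V"
      obtain k where k: "z - s k v \<in> A" using Bv z span_breakdown_eq[of z v A] spA by auto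
      have eq: "z - s (k / k0) y = (z - s k v) - s (k / k0) (y - s k0 v)"
        using k0nz by (simp add: scale_right_diff_distrib)
      have "z - s (k / k0) y \<in> A"
        unfolding eq by (rule subspace_diff[OF A k subspace_scale[OF A k0]])
      moreover have "z - s (k / k0) y \<in> V"
        using z y V by (intro subspace_diff subspace_scale) auto
      ultimately have "z - s (k / k0) y \<in> span (A \<inter> V)" using span_superset by blast
      then show "z \<in> span (insert y (A \<inter> V))" using span_breakdown_eq by blast
    qed
    then have "dim (B \<inter> V) \<le> dim (insert y (A \<inter> V))" by (rule dim_mono)
    also have "\<dots> \<le> dim (A \<inter> V) + 1" by (simp add: dim_insert)
    finally show ?thesis .
  qed
qed



lemma subspace_Times:
  assumes "module.subspace s1 A" "module.subspace s2 B" and vs: "vector_space s1" "vector_space s2"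
  shows "module.subspace (prod_scale s1 s2) (A \<times> B)"
proof -
  have a: "0 \<in> A \<and> (\<forall>x\<in>A. \<forall>y\<in>A. x + y \<in> A) \<and> (\<forall>c. \<forall>x\<in>A. s1 c x \<in> A)"
    using assms(1) unfolding module.subspace_def[OF vs(1)[unfolded module_iff_vector_space[symmetric]]] .
  have b: "0 \<in> B \<and> (\<forall>x\<in>B. \<forall>y\<in>B. x + y \<in> B) \<and> (\<forall>c. \<forall>x\<in>B. s2 c x \<in> B)"
    using assms(2) unfolding module.subspace_def[OF vs(2)[unfolded module_iff_vector_space[symmetric]]] .
  show ?thesis unfolding module.subspace_def[OF vs_prod[OF vs, unfolded module_iff_vector_space[symmetric]]]
  proof (intro conjI ballI allI)
    show "0 \<in> A \<times> B" using a b by (simp add: zero_prod_def)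
  next
    fix x y assume "x \<in> A \<times> B" "y \<in> A \<times> B"
    then show "x + y \<in> A \<times> B" using a b by (auto simp: mem_Times_iff)
  next
    fix c x assume "x \<in> A \<times> B"
    then show "prod_scale s1 s2 c x \<in> A \<times> B" using a b by (auto simp: mem_Times_iff prod_scale_def)
  qed
qed

lemma coord1:
  fixes s1 :: "'f::field \<Rightarrow> 'a::ab_group_add \<Rightarrow> 'a" and s2 :: "'f \<Rightarrow> 'b::ab_group_add \<Rightarrow> 'b"
  assumes vs1: "vector_space s1" and vs2: "vector_space s2"
    and fd1: "finite_dimensional_vector_space s1 B1"
    and fdP: "finite_dimensional_vector_space (prod_scale s1 s2) BP"
    and F: "module.subspace s1 F"
    and W: "module.subspace s2 W" and V: "module.subspace (prod_scale s1 s2) V"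
  shows "module.subspace s1 Z \<Longrightarrow> Z \<subseteq> F \<Longrightarrow>
    vector_space.dim (prod_scale s1 s2) ((F \<times> W) \<inter> V) + vector_space.dim s1 Z
      \<le> vector_space.dim (prod_scale s1 s2) ((Z \<times> W) \<inter> V) + vector_space.dim s1 F"
proof (induction "vector_space.dim s1 F - vector_space.dim s1 Z" arbitrary: Z rule: less_induct)
  case less
  interpret v1: finite_dimensional_vector_space s1 B1 by fact
  interpret vP: finite_dimensional_vector_space "prod_scale s1 s2" BP by fact
  interpret v2: vector_space s2 by fact
  show ?case
  proof (cases "Z = F")
    case True then show ?thesis by simp
  next
    case False
    then obtain x where x: "x \<in> F" "x \<notin> Z" using less.prems by blast
    have spZ: "v1.span Z = Z" using less.prems(1) by (rule v1.span_eq_iff[THEN iffD2])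
    define Z' where "Z' = v1.span (insert x Z)"
    have Z's: "v1.subspace Z'" unfolding Z'_def by simp
    have Z'F: "Z' \<subseteq> F" unfolding Z'_def using x less.prems F by (intro v1.span_minimal) auto
    have ZZ': "Z \<subseteq> Z'" unfolding Z'_def using v1.span_superset[of "insert x Z"] by blast
    have dZ': "v1.dim Z' = v1.dim Z + 1" unfolding Z'_def
      using x spZ v1.dim_insert[of x Z] v1.dim_span[of "insert x Z"] by (simp del: v1.span_eq_iff)
    have "v1.dim Z' \<le> v1.dim F" using Z'F by (rule v1.dim_subset)
    then have lt: "v1.dim F - v1.dim Z' < v1.dim F - v1.dim Z" using dZ' by simp
    have IH: "vP.dim ((F \<times> W) \<inter> V) + v1.dim Z' \<le> vP.dim ((Z' \<times> W) \<inter> V) + v1.dim F"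
      by (rule less.hyps[OF lt Z's Z'F])
    have ZWs: "vP.subspace (Z \<times> W)" by (rule subspace_Times[OF less.prems(1) W vs1 vs2])
    have sub: "Z' \<times> W \<subseteq> vP.span (insert (x, 0) (Z \<times> W))"
    proof
      fix p assume p: "p \<in> Z' \<times> W"
      obtain z w where pz: "p = (z, w)" by (cases p)
      have "z \<in> v1.span (insert x Z)" using p pz Z'_def by auto
      then obtain k where k: "z - s1 k x \<in> Z" using v1.span_breakdown_eq[of z x Z] spZ by auto
      have "p - prod_scale s1 s2 k (x, 0) \<in> Z \<times> W"
        using k p pz by (simp add: prod_scale_def)
      then have "p - prod_scale s1 s2 k (x, 0) \<in> vP.span (Z \<times> W)" by (rule vP.span_base)
      then show "p \<in> vP.span (insert (x, 0) (Z \<times> W))" by (rule vP.span_breakdown_eq[THEN iffD2, OF exI[of _ k]])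
    qed
    have "vP.dim ((Z' \<times> W) \<inter> V) \<le> vP.dim ((Z \<times> W) \<inter> V) + 1"
      by (rule step_dim[OF fdP ZWs _ sub V]) (use ZZ' in auto)
    then show ?thesis using IH dZ' by simp
  qed
qed

lemma coord2:
  fixes s1 :: "'f::field \<Rightarrow> 'a::ab_group_add \<Rightarrow> 'a" and s2 :: "'f \<Rightarrow> 'b::ab_group_add \<Rightarrow> 'b"
  assumes vs1: "vector_space s1" and vs2: "vector_space s2"
    and fd2: "finite_dimensional_vector_space s2 B2"
    and fdP: "finite_dimensional_vector_space (prod_scale s1 s2) BP"
    and F: "module.subspace s2 F"
    and W: "module.subspace s1 W" and V: "module.subspace (prod_scale s1 s2) V"
  shows "module.subspace s2 Z \<Longrightarrow> Z \<subseteq> F \<Longrightarrow>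
    vector_space.dim (prod_scale s1 s2) ((W \<times> F) \<inter> V) + vector_space.dim s2 Z
      \<le> vector_space.dim (prod_scale s1 s2) ((W \<times> Z) \<inter> V) + vector_space.dim s2 F"
proof (induction "vector_space.dim s2 F - vector_space.dim s2 Z" arbitrary: Z rule: less_induct)
  case less
  interpret v2: finite_dimensional_vector_space s2 B2 by fact
  interpret vP: finite_dimensional_vector_space "prod_scale s1 s2" BP by fact
  interpret v1: vector_space s1 by fact
  show ?case
  proof (cases "Z = F")
    case True then show ?thesis by simp
  next
    case False
    then obtain x where x: "x \<in> F" "x \<notin> Z" using less.prems by blast
    have spZ: "v2.span Z = Z" using less.prems(1) by (rule v2.span_eq_iff[THEN iffD2])
    define Z' where "Z' = v2.span (insert x Z)"
    have Z's: "v2.subspace Z'" unfolding Z'_def by simp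
    have Z'F: "Z' \<subseteq> F" unfolding Z'_def using x less.prems F by (intro v2.span_minimal) auto
    have ZZ': "Z \<subseteq> Z'" unfolding Z'_def using v2.span_superset[of "insert x Z"] by blast
    have dZ': "v2.dim Z' = v2.dim Z + 1" unfolding Z'_def
      using x spZ v2.dim_insert[of x Z] v2.dim_span[of "insert x Z"] by (simp del: v2.span_eq_iff)
    have "v2.dim Z' \<le> v2.dim F" using Z'F by (rule v2.dim_subset)
    then have lt: "v2.dim F - v2.dim Z' < v2.dim F - v2.dim Z" using dZ' by simp
    have IH: "vP.dim ((W \<times> F) \<inter> V) + v2.dim Z' \<le> vP.dim ((W \<times> Z') \<inter> V) + v2.dim F"
      by (rule less.hyps[OF lt Z's Z'F])
    have ZWs: "vP.subspace (W \<times> Z)" by (rule subspace_Times[OF W less.prems(1) vs1 vs2])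
    have sub: "W \<times> Z' \<subseteq> vP.span (insert (0, x) (W \<times> Z))"
    proof
      fix p assume p: "p \<in> W \<times> Z'"
      obtain w z where pz: "p = (w, z)" by (cases p)
      have "z \<in> v2.span (insert x Z)" using p pz Z'_def by auto
      then obtain k where k: "z - s2 k x \<in> Z" using v2.span_breakdown_eq[of z x Z] spZ by auto
      have "p - prod_scale s1 s2 k (0, x) \<in> W \<times> Z"
        using k p pz by (simp add: prod_scale_def)
      then have "p - prod_scale s1 s2 k (0, x) \<in> vP.span (W \<times> Z)" by (rule vP.span_base)
      then show "p \<in> vP.span (insert (0, x) (W \<times> Z))" by (rule vP.span_breakdown_eq[THEN iffD2, OF exI[of _ k]])
    qed
    have "vP.dim ((W \<times> Z') \<inter> V) \<le> vP.dim ((W \<times> Z) \<inter> V) + 1"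
      by (rule step_dim[OF fdP ZWs _ sub V]) (use ZZ' in auto)
    then show ?thesis using IH dZ' by simp
  qed
qed



lemma Min_eq_int:
  fixes A B :: "int set"
  assumes "finite A" "finite B" "B \<noteq> {}" "\<forall>a\<in>A. \<exists>b\<in>B. b \<le> a" "\<forall>b\<in>B. \<exists>a\<in>A. a \<le> b"
  shows "Min A = Min B"
proof -
  have "Min B \<in> B" using assms by (intro Min_in) auto
  then obtain a where a: "a \<in> A" "a \<le> Min B" using assms(5) by blast
  then have "A \<noteq> {}" by blast
  have "Min A \<in> A" using assms(1) \<open>A \<noteq> {}\<close> by (intro Min_in) auto
  then obtain b where b: "b \<in> B" "b \<le> Min A" using assms(4) by blast
  have "Min A \<le> a" using assms(1) a by simp
  moreover have "Min B \<le> b" using assms(2) b by simp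
  ultimately show ?thesis using a b by simp
qed

lemma subspace_proj:
  assumes vs: "vector_space s1" "vector_space s2" and X: "module.subspace (prod_scale s1 s2) X"
  shows "module.subspace s1 (fst ` X) \<and> module.subspace s2 (snd ` X)"
proof -
  have x: "0 \<in> X \<and> (\<forall>x\<in>X. \<forall>y\<in>X. x + y \<in> X) \<and> (\<forall>c. \<forall>x\<in>X. prod_scale s1 s2 c x \<in> X)"
    using X unfolding module.subspace_def[OF vs_prod[OF vs, unfolded module_iff_vector_space[symmetric]]] .
  have 1: "module.subspace s1 (fst ` X)"
    unfolding module.subspace_def[OF vs(1)[unfolded module_iff_vector_space[symmetric]]]
  proof (intro conjI ballI allI)
    show "0 \<in> fst ` X" using x by (metis fst_zero image_eqI)
  next
    fix a b assume "a \<in> fst ` X" "b \<in> fst ` X"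
    then obtain p q where "p \<in> X" "q \<in> X" "a = fst p" "b = fst q" by blast
    then show "a + b \<in> fst ` X" using x by (metis fst_add image_eqI)
  next
    fix c a assume "a \<in> fst ` X"
    then obtain p where "p \<in> X" "a = fst p" by blast
    then show "s1 c a \<in> fst ` X" using x by (intro image_eqI[of _ _ "prod_scale s1 s2 c p"]) (auto simp: prod_scale_def)
  qed
  have 2: "module.subspace s2 (snd ` X)"
    unfolding module.subspace_def[OF vs(2)[unfolded module_iff_vector_space[symmetric]]]
  proof (intro conjI ballI allI)
    show "0 \<in> snd ` X" using x by (metis snd_zero image_eqI)
  next
    fix a b assume "a \<in> snd ` X" "b \<in> snd ` X"
    then obtain p q where "p \<in> X" "q \<in> X" "a = snd p" "b = snd q" by blast
    then show "a + b \<in> snd ` X" using x by (metis snd_add image_eqI)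
  next
    fix c a assume "a \<in> snd ` X"
    then obtain p where "p \<in> X" "a = snd p" by blast
    then show "s2 c a \<in> snd ` X" using x by (intro image_eqI[of _ _ "prod_scale s1 s2 c p"]) (auto simp: prod_scale_def)
  qed
  show ?thesis using 1 2 by blast
qed

lemma UNIV_flat: "vector_space s \<Longrightarrow> qflat s rho UNIV"
  unfolding qflat_def using module.subspace_UNIV[of s] by (simp add: module_iff_vector_space)



theorem theorem5p8:
  fixes s1 :: "'f::{field,finite} \<Rightarrow> 'a::ab_group_add \<Rightarrow> 'a"
    and s2 :: "'f \<Rightarrow> 'b::ab_group_add \<Rightarrow> 'b"
    and rho1 :: "'a set \<Rightarrow> nat" and rho2 :: "'b set \<Rightarrow> nat"
    and V :: "('a \<times> 'b) set"
  assumes "qmatroid s1 rho1" and "qmatroid s2 rho2"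
    and "module.subspace (prod_scale s1 s2) V"
  shows "qsum_rank s1 rho1 s2 rho2 V =
           int (vector_space.dim (prod_scale s1 s2) V) +
           Min {int (rho1 F1) + int (rho2 F2) - int (vector_space.dim (prod_scale s1 s2) ((F1 \<times> F2) \<inter> V))
                | F1 F2. qflat s1 rho1 F1 \<and> qflat s2 rho2 F2}
       \<and> qsum_rank s1 rho1 s2 rho2 V =
           int (vector_space.dim (prod_scale s1 s2) V) +
           Min {int (rho1 Z1) + int (rho2 Z2) - int (vector_space.dim (prod_scale s1 s2) ((Z1 \<times> Z2) \<inter> V))
                | Z1 Z2. qcyclic_flat s1 rho1 Z1 \<and> qcyclic_flat s2 rho2 Z2}"
proof -
  note qm1 = assms(1) and qm2 = assms(2) and Vs = assms(3)
  have vs1: "vector_space s1" by (rule qm_vs[OF qm1])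
  have vs2: "vector_space s2" by (rule qm_vs[OF qm2])
  have fin1: "finite (UNIV::'a set)" by (rule qm_fin[OF qm1])
  have fin2: "finite (UNIV::'b set)" by (rule qm_fin[OF qm2])
  have vsP: "vector_space (prod_scale s1 s2)" by (rule vs_prod[OF vs1 vs2])
  have finP: "finite (UNIV::('a \<times> 'b) set)" using fin1 fin2 by (simp add: finite_prod)
  obtain B1 where fd1: "finite_dimensional_vector_space s1 B1" using fdvs_exists[OF vs1 fin1] by blast
  obtain B2 where fd2: "finite_dimensional_vector_space s2 B2" using fdvs_exists[OF vs2 fin2] by blast
  obtain BP where fdP: "finite_dimensional_vector_space (prod_scale s1 s2) BP" using fdvs_exists[OF vsP finP] by blast
  interpret vP: finite_dimensional_vector_space "prod_scale s1 s2" BP by (rule fdP)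
  interpret v1: finite_dimensional_vector_space s1 B1 by (rule fd1)
  interpret v2: finite_dimensional_vector_space s2 B2 by (rule fd2)
  define SX where "SX = {int (rho1 (fst ` X)) + int (rho2 (snd ` X)) - int (vector_space.dim (prod_scale s1 s2) X)
          | X. module.subspace (prod_scale s1 s2) X \<and> X \<subseteq> V}"
  define SF where "SF = {int (rho1 F1) + int (rho2 F2) - int (vector_space.dim (prod_scale s1 s2) ((F1 \<times> F2) \<inter> V))
                | F1 F2. qflat s1 rho1 F1 \<and> qflat s2 rho2 F2}"
  define SZ where "SZ = {int (rho1 Z1) + int (rho2 Z2) - int (vector_space.dim (prod_scale s1 s2) ((Z1 \<times> Z2) \<inter> V))
                | Z1 Z2. qcyclic_flat s1 rho1 Z1 \<and> qcyclic_flat s2 rho2 Z2}"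
  have finS1: "finite {x :: 'a set. P x}" for P
  proof -
    have "finite (UNIV :: 'a set set)" using fin1 by (simp add: Finite_Set.finite_set)
    then show ?thesis by (rule finite_subset[OF subset_UNIV])
  qed
  have finS2: "finite {x :: 'b set. P x}" for P
  proof -
    have "finite (UNIV :: 'b set set)" using fin2 by (simp add: Finite_Set.finite_set)
    then show ?thesis by (rule finite_subset[OF subset_UNIV])
  qed
  have finSP: "finite {x :: ('a \<times> 'b) set. P x}" for P
  proof -
    have "finite (UNIV :: ('a \<times> 'b) set set)" using finP by (simp add: Finite_Set.finite_set)
    then show ?thesis by (rule finite_subset[OF subset_UNIV])
  qed
  have finSX: "finite SX" unfolding SX_def by (rule finite_image_set[OF finSP])
  have finSF: "finite SF" unfolding SF_def by (rule finite_image_set2[OF finS1 finS2])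
  have finSZ: "finite SZ" unfolding SZ_def by (rule finite_image_set2[OF finS1 finS2])
  have neSF: "SF \<noteq> {}" unfolding SF_def using UNIV_flat[OF vs1] UNIV_flat[OF vs2] by blast
  have fsub1: "v1.subspace F" if "qflat s1 rho1 F" for F using that unfolding qflat_def by blast
  have fsub2: "v2.subspace F" if "qflat s2 rho2 F" for F using that unfolding qflat_def by blast
  have a: "\<forall>a\<in>SX. \<exists>b\<in>SF. b \<le> a"
  proof
    fix a assume "a \<in> SX"
    then obtain X where X: "a = int (rho1 (fst ` X)) + int (rho2 (snd ` X)) - int (vP.dim X)"
      "vP.subspace X" "X \<subseteq> V" unfolding SX_def by blast
    have pr: "v1.subspace (fst ` X)" "v2.subspace (snd ` X)" using subspace_proj[OF vs1 vs2 X(2)] by auto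
    obtain F1 where F1: "qflat s1 rho1 F1" "fst ` X \<subseteq> F1" "rho1 F1 = rho1 (fst ` X)"
      using closure_exists[OF qm1 pr(1)] by blast
    obtain F2 where F2: "qflat s2 rho2 F2" "snd ` X \<subseteq> F2" "rho2 F2 = rho2 (snd ` X)"
      using closure_exists[OF qm2 pr(2)] by blast
    have "X \<subseteq> (F1 \<times> F2) \<inter> V" using X(3) F1(2) F2(2) by (force simp: mem_Times_iff)
    then have "vP.dim X \<le> vP.dim ((F1 \<times> F2) \<inter> V)" by (rule vP.dim_subset)
    then have le: "int (rho1 F1) + int (rho2 F2) - int (vP.dim ((F1 \<times> F2) \<inter> V)) \<le> a"
      using X(1) F1(3) F2(3) by simp
    have "int (rho1 F1) + int (rho2 F2) - int (vP.dim ((F1 \<times> F2) \<inter> V)) \<in> SF"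
      unfolding SF_def using F1(1) F2(1) by blast
    then show "\<exists>b\<in>SF. b \<le> a" using le by blast
  qed
  have b: "\<forall>b\<in>SF. \<exists>a\<in>SX. a \<le> b"
  proof
    fix b assume "b \<in> SF"
    then obtain F1 F2 where F: "b = int (rho1 F1) + int (rho2 F2) - int (vP.dim ((F1 \<times> F2) \<inter> V))"
      "qflat s1 rho1 F1" "qflat s2 rho2 F2" unfolding SF_def by blast
    define X where "X = (F1 \<times> F2) \<inter> V"
    have Xs: "vP.subspace X" unfolding X_def
      by (rule vP.subspace_inter[OF subspace_Times[OF fsub1[OF F(2)] fsub2[OF F(3)] vs1 vs2] Vs])
    have pr: "v1.subspace (fst ` X)" "v2.subspace (snd ` X)" using subspace_proj[OF vs1 vs2 Xs] by auto
    have "fst ` X \<subseteq> F1" "snd ` X \<subseteq> F2" unfolding X_def by auto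
    then have "rho1 (fst ` X) \<le> rho1 F1" "rho2 (snd ` X) \<le> rho2 F2"
      using qm_mono[OF qm1 pr(1) fsub1[OF F(2)]] qm_mono[OF qm2 pr(2) fsub2[OF F(3)]] by auto
    then have le: "int (rho1 (fst ` X)) + int (rho2 (snd ` X)) - int (vP.dim X) \<le> b"
      using F(1) unfolding X_def by simp
    have "int (rho1 (fst ` X)) + int (rho2 (snd ` X)) - int (vP.dim X) \<in> SX"
      unfolding SX_def using Xs X_def by blast
    then show "\<exists>a\<in>SX. a \<le> b" using le by blast
  qed
  have c: "\<forall>b\<in>SF. \<exists>a\<in>SZ. a \<le> b"
  proof
    fix b assume "b \<in> SF"
    then obtain F1 F2 where F: "b = int (rho1 F1) + int (rho2 F2) - int (vP.dim ((F1 \<times> F2) \<inter> V))"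
      "qflat s1 rho1 F1" "qflat s2 rho2 F2" unfolding SF_def by blast
    obtain Z1 where Z1: "qcyclic_flat s1 rho1 Z1" "Z1 \<subseteq> F1"
      "int (rho1 Z1) - int (v1.dim Z1) \<le> int (rho1 F1) - int (v1.dim F1)"
      using cyclic_flat_below[OF qm1 F(2)] by blast
    obtain Z2 where Z2: "qcyclic_flat s2 rho2 Z2" "Z2 \<subseteq> F2"
      "int (rho2 Z2) - int (v2.dim Z2) \<le> int (rho2 F2) - int (v2.dim F2)"
      using cyclic_flat_below[OF qm2 F(3)] by blast
    have Z1s: "v1.subspace Z1" using Z1(1) fsub1 unfolding qcyclic_flat_def by blast
    have Z2s: "v2.subspace Z2" using Z2(1) fsub2 unfolding qcyclic_flat_def by blast
    have c1: "vP.dim ((F1 \<times> F2) \<inter> V) + v1.dim Z1 \<le> vP.dim ((Z1 \<times> F2) \<inter> V) + v1.dim F1"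
      by (rule coord1[OF vs1 vs2 fd1 fdP fsub1[OF F(2)] fsub2[OF F(3)] Vs Z1s Z1(2)])
    have c2: "vP.dim ((Z1 \<times> F2) \<inter> V) + v2.dim Z2 \<le> vP.dim ((Z1 \<times> Z2) \<inter> V) + v2.dim F2"
      by (rule coord2[OF vs1 vs2 fd2 fdP fsub2[OF F(3)] Z1s Vs Z2s Z2(2)])
    have le: "int (rho1 Z1) + int (rho2 Z2) - int (vP.dim ((Z1 \<times> Z2) \<inter> V)) \<le> b"
      using F(1) Z1(3) Z2(3) c1 c2 by linarith
    have "int (rho1 Z1) + int (rho2 Z2) - int (vP.dim ((Z1 \<times> Z2) \<inter> V)) \<in> SZ"
      unfolding SZ_def using Z1(1) Z2(1) by blast
    then show "\<exists>a\<in>SZ. a \<le> b" using le by blast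
  qed
  have d: "\<forall>a\<in>SZ. \<exists>b\<in>SF. b \<le> a"
  proof
    fix a assume "a \<in> SZ"
    then have "a \<in> SF" unfolding SZ_def SF_def qcyclic_flat_def by blast
    then show "\<exists>b\<in>SF. b \<le> a" by blast
  qed
  have e1: "Min SX = Min SF" by (rule Min_eq_int[OF finSX finSF neSF a b])
  have e2: "Min SZ = Min SF" by (rule Min_eq_int[OF finSZ finSF neSF d c])
  have q: "qsum_rank s1 rho1 s2 rho2 V = int (vP.dim V) + Min SX"
    unfolding qsum_rank_def SX_def by simp
  show ?thesis unfolding SF_def[symmetric] SZ_def[symmetric] using q e1 e2 by simp
qed

end
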